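(* If $\mathbb{A}$ is a $C$-asymptotic set, then $\mathbb{A}$ is a $C$-pseudo-cone and $$\mathbb{A}=\bigcap_{v\in\Omega_{C^\circ}}H^-(v,h_{\mathbb{A}}(v)).$$
   Context: $C\subset\mathbb{R}^n$ ($n\ge2$) is a pointed closed convex cone with nonempty interior; $C^\circ=\{y:\langle x,y\rangle\le0\ \forall x\in C\}$; $\Omega_{C^\circ}=\mathbb{S}^{n-1}\cap\operatorname{int}C^\circ$. A $C$-asymptotic set is an unbounded closed convex set $\mathbb{A}\subset C$ with nonempty interior and $o\notin\mathbb{A}$ such that $\lim_{x\in\partial\mathbb{A},|x|\to\infty}d(x,\partial C)=0$. A $C$-pseudo-cone is a nonempty closed convex set $E$ with $o\notin E$, $\lambda x\in E$ for all $x\in E,\lambda\ge1$, and recession cone $\{x:E+x\subset E\}$ equal to $C$. $h_{\mathbb{A}}(v)=\sup_{x\in\mathbb{A}}\langle x,v\rangle$ and $H^-(v,\alpha)=\{x:\langle x,v\rangle\le\alpha\}$. *)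

theory Defs
  imports "HOL-Analysis.Analysis"
begin

definition pointed_cone :: "'a::euclidean_space set \<Rightarrow> bool" where
  "pointed_cone C \<longleftrightarrow> cone C \<and> C \<inter> uminus ` C \<subseteq> {0}"

definition proper_cone :: "'a::euclidean_space set \<Rightarrow> bool" where
  "proper_cone C \<longleftrightarrow> pointed_cone C \<and> closed C \<and> convex C \<and> interior C \<noteq> {}"

definition polar :: "'a::euclidean_space set \<Rightarrow> 'a set" where
  "polar C = {y. \<forall>x\<in>C. x \<bullet> y \<le> 0}"

definition Omega_polar :: "'a::euclidean_space set \<Rightarrow> 'a set" where
  "Omega_polar C = sphere 0 1 \<inter> interior (polar C)"

definition C_asymptotic :: "'a::euclidean_space set \<Rightarrow> 'a set \<Rightarrow> bool" where
  "C_asymptotic C A \<longleftrightarrow> \<not> bounded A \<and> closed A \<and> convex A \<and> A \<subseteq> C \<and>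
     interior A \<noteq> {} \<and> 0 \<notin> A \<and>
     (\<forall>e>0. \<exists>R. \<forall>x\<in>frontier A. norm x > R \<longrightarrow> infdist x (frontier C) < e)"

definition recession_cone :: "'a::euclidean_space set \<Rightarrow> 'a set" where
  "recession_cone E = {x. (\<lambda>y. y + x) ` E \<subseteq> E}"

definition C_pseudo_cone :: "'a::euclidean_space set \<Rightarrow> 'a set \<Rightarrow> bool" where
  "C_pseudo_cone C E \<longleftrightarrow> E \<noteq> {} \<and> closed E \<and> convex E \<and> 0 \<notin> E \<and>
     (\<forall>x\<in>E. \<forall>t::real. t \<ge> 1 \<longrightarrow> t *\<^sub>R x \<in> E) \<and> recession_cone E = C"

definition support_fun :: "'a::euclidean_space set \<Rightarrow> 'a \<Rightarrow> real" where
  "support_fun A v = (SUP x\<in>A. x \<bullet> v)"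

definition halfspace_le :: "'a::euclidean_space \<Rightarrow> real \<Rightarrow> 'a set" where
  "halfspace_le v \<alpha> = {x. x \<bullet> v \<le> \<alpha>}"

end

theory Submission
  imports Defs
begin


lemma pc_add: "proper_cone C \<Longrightarrow> x\<in>C \<Longrightarrow> y\<in>C \<Longrightarrow> x+y\<in>C"
  unfolding proper_cone_def pointed_cone_def using convex_cone by blast

lemma pc_scale: "proper_cone C \<Longrightarrow> x\<in>C \<Longrightarrow> c\<ge>0 \<Longrightarrow> c *\<^sub>R x\<in>C"
  unfolding proper_cone_def pointed_cone_def cone_def by blast

lemma pc_0: "proper_cone C \<Longrightarrow> 0 \<in> C"
proof -
  assume a: "proper_cone C"
  then have "C \<noteq> {}" unfolding proper_cone_def using interior_subset by blast
  then obtain x where "x \<in> C" by blast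
  from pc_scale[OF a this, of 0] show ?thesis by simp
qed

lemma pc_ball_le:
  fixes C :: "'a::euclidean_space set"
  assumes pc: "proper_cone C" and b: "ball q \<rho> \<subseteq> C"
  shows "\<rho> \<le> norm q"
proof (rule ccontr)
  assume "\<not> \<rho> \<le> norm q"
  define \<delta> where "\<delta> = \<rho> - norm q"
  have d: "\<delta> > 0" using \<open>\<not> \<rho> \<le> norm q\<close> by (simp add: \<delta>_def)
  obtain e :: 'a where e: "e \<in> Basis" using nonempty_Basis by blast
  define x where "x = (\<delta>/2) *\<^sub>R e"
  have nx: "norm x = \<delta>/2" using e d by (simp add: x_def)
  have "norm (q - x) \<le> norm q + norm x" by (rule norm_triangle_ineq4)
  hence "x \<in> ball q \<rho>" using nx d unfolding \<delta>_def mem_ball dist_norm by argo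
  hence xC: "x \<in> C" using b by blast
  have "norm (q + x) \<le> norm q + norm x" by (rule norm_triangle_ineq)
  hence "-x \<in> ball q \<rho>" using nx d unfolding \<delta>_def mem_ball dist_norm by (simp only: diff_minus_eq_add minus_minus) argo
  hence mxC: "-x \<in> C" using b by blast
  have "x \<in> uminus ` C" using mxC by (metis image_eqI minus_minus)
  hence "x \<in> {0}" using xC pc unfolding proper_cone_def pointed_cone_def by blast
  thus False using nx d by simp
qed

lemma pc_0_frontier:
  fixes C :: "'a::euclidean_space set"
  assumes pc: "proper_cone C" shows "0 \<in> frontier C"
proof -
  have "0 \<notin> interior C"
  proof
    assume "0 \<in> interior C"
    then obtain d where "d > 0" "ball 0 d \<subseteq> C" using mem_interior by blast
    with pc_ball_le[OF pc] show False by fastforce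
  qed
  moreover have "closed C" using pc proper_cone_def by blast
  ultimately show ?thesis using pc_0[OF pc] by (simp add: frontier_def)
qed

lemma depth:
  fixes C :: "'a::euclidean_space set"
  assumes pc: "proper_cone C" and b: "ball q \<delta> \<subseteq> C"
  shows "\<delta> \<le> infdist q (frontier C)"
proof -
  have ne: "frontier C \<noteq> {}" using pc_0_frontier[OF pc] by blast
  have "ball q \<delta> \<subseteq> interior C" using b interior_maximal by blast
  hence "\<forall>a\<in>frontier C. \<delta> \<le> dist q a"
    by (auto simp: frontier_def) (meson in_mono mem_ball not_le)
  thus ?thesis unfolding infdist_def using ne by (auto intro: cINF_greatest)
qed



lemma pc_sum:
  assumes pc: "proper_cone C" and "finite S" and "\<forall>x\<in>S. f x \<in> C" shows "sum f S \<in> C"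
  using assms(2,3) by (induction S rule: finite_induct) (auto intro: pc_add[OF pc] pc_0[OF pc])

lemma pc_dual:
  fixes C :: "'a::euclidean_space set"
  assumes pc: "proper_cone C"
  shows "\<exists>w b. b > 0 \<and> (\<forall>c\<in>C. w \<bullet> c \<le> - b * norm c)"
proof -
  define K where "K = convex hull (C \<inter> sphere 0 1)"
  have cC: "closed C" using pc proper_cone_def by blast
  have "compact (C \<inter> sphere 0 1)" using cC by (simp add: compact_Int_closed closed_Int_compact)
  hence cK: "closed K" unfolding K_def by (simp add: compact_convex_hull compact_imp_closed)
  have 0: "0 \<notin> K"
  proof
    assume "0 \<in> K"
    then obtain S u where S: "finite S" "S \<subseteq> C \<inter> sphere 0 1" "\<forall>x\<in>S. 0 \<le> u x" "sum u S = 1"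
        "(\<Sum>v\<in>S. u v *\<^sub>R v) = 0"
      unfolding K_def convex_hull_explicit by blast
    obtain x where x: "x \<in> S" "u x > 0"
    proof (rule ccontr)
      assume "\<not> thesis"
      with that have "\<forall>x\<in>S. u x \<le> 0" by force
      with S(3) have "\<forall>x\<in>S. u x = 0" by force
      with S(4) show False by simp
    qed
    have "(\<Sum>v\<in>S. u v *\<^sub>R v) = u x *\<^sub>R x + (\<Sum>v\<in>S - {x}. u v *\<^sub>R v)"
      using S(1) x(1) by (simp add: sum.remove)
    hence eq: "- (u x *\<^sub>R x) = (\<Sum>v\<in>S - {x}. u v *\<^sub>R v)" using S(5)
      by (simp add: neg_eq_iff_add_eq_0)
    have "(\<Sum>v\<in>S - {x}. u v *\<^sub>R v) \<in> C"
      using S by (intro pc_sum[OF pc]) (auto intro!: pc_scale[OF pc])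
    hence m: "- (u x *\<^sub>R x) \<in> C" using eq by simp
    have p: "u x *\<^sub>R x \<in> C" using x S by (auto intro!: pc_scale[OF pc])
    have "u x *\<^sub>R x \<in> uminus ` C" using m by (metis image_eqI minus_minus)
    hence "u x *\<^sub>R x = 0" using p pc unfolding proper_cone_def pointed_cone_def by blast
    moreover have "norm x = 1" using S x by auto
    ultimately show False using x by simp
  qed
  have "convex K" unfolding K_def by simp
  then obtain a b where ab: "a \<noteq> 0" "0 < b" "\<forall>x\<in>K. inner a x > b"
    using separating_hyperplane_closed_0[OF _ cK 0] by blast
  have "\<forall>c\<in>C. (-a) \<bullet> c \<le> - b * norm c"
  proof
    fix c assume c: "c \<in> C"
    show "(-a) \<bullet> c \<le> - b * norm c"
    proof (cases "c = 0")
      case False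
      have "(1/norm c) *\<^sub>R c \<in> C \<inter> sphere 0 1" using False c by (auto intro!: pc_scale[OF pc])
      hence "(1/norm c) *\<^sub>R c \<in> K" unfolding K_def by (simp add: hull_inc)
      hence "inner a ((1/norm c) *\<^sub>R c) > b" using ab by blast
      hence "(a \<bullet> c) / norm c > b" by simp
      hence "a \<bullet> c > b * norm c" using False by (simp add: field_simps)
      thus ?thesis by simp
    qed simp
  qed
  thus ?thesis using ab by blast
qed

lemma pc_int_polar:
  fixes C :: "'a::euclidean_space set"
  assumes pc: "proper_cone C"
  obtains w \<rho> where "\<rho> > 0" "ball w \<rho> \<subseteq> polar C"
proof -
  obtain w b where wb: "b > 0" "\<forall>c\<in>C. w \<bullet> c \<le> - b * norm c" using pc_dual[OF pc] by blast
  have "ball w b \<subseteq> polar C"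
  proof
    fix y assume "y \<in> ball w b"
    hence n: "norm (y - w) < b" by (simp add: dist_norm norm_minus_commute)
    show "y \<in> polar C" unfolding polar_def
    proof (clarify)
      fix x assume x: "x \<in> C"
      have "x \<bullet> y = x \<bullet> w + x \<bullet> (y - w)" by (simp add: inner_diff_right)
      have 1: "x \<bullet> (y-w) \<le> norm x * norm (y-w)" by (rule norm_cauchy_schwarz)
      have 2: "x \<bullet> w \<le> -b * norm x" using wb x by (metis inner_commute)
      have 3: "norm x * norm (y-w) \<le> norm x * b" using n by (simp add: mult_left_mono)
      have "x \<bullet> y \<le> -b * norm x + norm x * b" using 1 2 3 \<open>x \<bullet> y = x \<bullet> w + x \<bullet> (y - w)\<close> by linarith
      thus "x \<bullet> y \<le> 0" by (simp add: mult.commute)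
    qed
  qed
  with wb that show ?thesis by blast
qed



lemma int_rec:
  fixes C A :: "'a::euclidean_space set"
  assumes pc: "proper_cone C" and as: "C_asymptotic C A" and u: "u \<in> interior C" and x: "x \<in> A"
  shows "x + u \<in> A"
proof -
  have nb: "\<not> bounded A" and clA: "closed A" and cvA: "convex A" and AC: "A \<subseteq> C"
    and iA: "interior A \<noteq> {}"
    and cond: "\<forall>e>0. \<exists>R. \<forall>x\<in>frontier A. norm x > R \<longrightarrow> infdist x (frontier C) < e"
    using as unfolding C_asymptotic_def by auto
  have uC: "u \<in> C" using u interior_subset by blast
  obtain r where r: "r>0" "ball u r \<subseteq> C" using u mem_interior by blast
  obtain p where p: "p \<in> interior A" using iA by blast
  obtain \<epsilon> where ep: "\<epsilon>>0" "ball p \<epsilon> \<subseteq> A" using p mem_interior by blast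
  obtain R where R: "\<forall>y\<in>frontier A. norm y > R \<longrightarrow> infdist y (frontier C) < \<epsilon>/2"
    using cond ep(1) by (meson half_gt_zero)
  define R0 where "R0 = max R 0"
  have R0: "R0 \<ge> 0" "R \<le> R0" by (auto simp: R0_def)
  define B where "B = 2*(R0 + R0*norm u/r) + norm p + 1"
  obtain a where a: "a \<in> A" "norm a > B" using nb unfolding bounded_iff by (meson not_le)
  define m where "m = (1/2) *\<^sub>R (a + p)"
  have mball: "ball m (\<epsilon>/2) \<subseteq> A"
  proof
    fix y assume "y \<in> ball m (\<epsilon>/2)"
    hence n: "norm (m - y) < \<epsilon>/2" by (simp add: dist_norm)
    have "p - (2 *\<^sub>R y - a) = 2 *\<^sub>R (m - y)" by (simp add: m_def algebra_simps)
    hence "norm (p - (2 *\<^sub>R y - a)) = 2 * norm (m - y)" by simp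
    hence "2 *\<^sub>R y - a \<in> ball p \<epsilon>" using n by (simp add: dist_norm)
    hence "2 *\<^sub>R y - a \<in> A" using ep by blast
    from convexD[OF cvA a(1) this, of "1/2" "1/2"]
    show "y \<in> A" by (simp add: algebra_simps)
  qed
  have mA: "m \<in> A" using mball ep(1) by (meson centre_in_ball half_gt_zero subsetD)
  have mC: "m \<in> C" using mA AC by blast
  have nm: "norm m > R0 + R0*norm u/r"
  proof -
    have "norm (a + p) \<ge> norm a - norm p" by (metis norm_diff_ineq norm_minus_cancel diff_minus_eq_add)
    hence "norm m \<ge> (norm a - norm p)/2" by (simp add: m_def)
    thus ?thesis using a(2) unfolding B_def by argo
  qed
  have mray: "\<forall>s\<ge>0. m + s *\<^sub>R u \<in> A"
  proof (rule ccontr)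
    assume "\<not> (\<forall>s\<ge>0. m + s *\<^sub>R u \<in> A)"
    then obtain s where s: "s \<ge> 0" "m + s *\<^sub>R u \<notin> A" by blast
    have "closed_segment m (m + s *\<^sub>R u) \<inter> frontier A \<noteq> {}"
      by (rule connected_Int_frontier) (use mA s in auto)
    then obtain q where q: "q \<in> closed_segment m (m + s *\<^sub>R u)" "q \<in> frontier A" by blast
    then obtain \<theta> where th: "0 \<le> \<theta>" "\<theta> \<le> 1" "q = (1 - \<theta>) *\<^sub>R m + \<theta> *\<^sub>R (m + s *\<^sub>R u)"
      unfolding in_segment by blast
    define t where "t = \<theta> * s"
    have t0: "t \<ge> 0" using th s by (simp add: t_def)
    have qt: "q = m + t *\<^sub>R u" using th(3) by (simp add: t_def algebra_simps)
    have tuC: "t *\<^sub>R u \<in> C" using pc_scale[OF pc uC t0] .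
    have "ball q (\<epsilon>/2) \<subseteq> C"
    proof
      fix y assume "y \<in> ball q (\<epsilon>/2)"
      hence "y - t *\<^sub>R u \<in> ball m (\<epsilon>/2)" by (simp add: qt dist_norm algebra_simps)
      hence "y - t *\<^sub>R u \<in> C" using mball AC by blast
      from pc_add[OF pc this tuC] show "y \<in> C" by simp
    qed
    from depth[OF pc this] have "\<epsilon>/2 \<le> infdist q (frontier C)" .
    hence nq: "norm q \<le> R" using R q(2) by force
    have tr: "t * r \<le> norm q"
    proof (cases "t = 0")
      case True thus ?thesis by simp
    next
      case False
      hence tp: "t > 0" using t0 by simp
      have "ball q (t*r) \<subseteq> C"
      proof
        fix y assume "y \<in> ball q (t*r)"
        hence n: "norm (y - q) < t * r" by (simp add: dist_norm norm_minus_commute)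
        define z where "z = u + (1/t) *\<^sub>R (y - q)"
        have "norm (u - z) = norm (y - q) / t" using tp by (simp add: z_def)
        also have "\<dots> < r" using n tp by (simp add: divide_less_eq mult.commute)
        finally have "z \<in> C" using r(2) by (auto simp: dist_norm)
        hence "t *\<^sub>R z \<in> C" using pc_scale[OF pc _ t0] by blast
        from pc_add[OF pc mC this] have "m + t *\<^sub>R z \<in> C" .
        moreover have "m + t *\<^sub>R z = y" using tp by (simp add: z_def qt algebra_simps)
        ultimately show "y \<in> C" by simp
      qed
      from pc_ball_le[OF pc this] show ?thesis .
    qed
    have tb: "t \<le> R0 / r" using tr nq R0 r(1) by (simp add: le_divide_eq)
    have "norm q \<ge> norm m - t * norm u"
    proof -
      have "norm m \<le> norm q + norm (t *\<^sub>R u)"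
        by (metis qt add_diff_cancel_right' norm_triangle_ineq4)
      thus ?thesis using t0 by simp
    qed
    moreover have "t * norm u \<le> R0 / r * norm u" using mult_right_mono[OF tb norm_ge_zero] by simp
    ultimately have "norm q > R0" using nm by (simp add: field_simps)
    thus False using nq R0 by linarith
  qed
  have "x + u \<in> closure A" unfolding closure_approachable
  proof (intro allI impI)
    fix e :: real assume e: "e > 0"
    define l where "l = min 1 (e / (2*(norm (m - x) + 1)))"
    have D: "2*(norm (m - x) + 1) > 0" using norm_ge_zero[of "m-x"] by argo
    hence "e / (2*(norm (m - x) + 1)) > 0" using e by (rule divide_pos_pos[rotated])
    hence l: "l > 0" "l \<le> 1" by (auto simp: l_def)
    have "m + (1/l) *\<^sub>R u \<in> A" using mray l by simp
    from convexD[OF cvA x this, of "1-l" l] l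
    have yA: "(1-l) *\<^sub>R x + l *\<^sub>R (m + (1/l) *\<^sub>R u) \<in> A" by simp
    have "(1-l) *\<^sub>R x + l *\<^sub>R (m + (1/l) *\<^sub>R u) = x + u + l *\<^sub>R (m - x)"
      using l by (simp add: algebra_simps)
    hence d: "dist ((1-l) *\<^sub>R x + l *\<^sub>R (m + (1/l) *\<^sub>R u)) (x + u) = l * norm (m - x)"
      using l by (simp add: dist_norm)
    have "l * norm (m - x) \<le> e / (2*(norm (m - x) + 1)) * norm (m - x)"
      by (rule mult_right_mono) (auto simp: l_def)
    also have "\<dots> < e"
    proof -
      have "norm (m - x) < 2*(norm (m - x) + 1)" using norm_ge_zero[of "m-x"] by argo
      hence "e * norm (m - x) < e * (2*(norm (m - x) + 1))" using e by (rule mult_strict_left_mono)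
      hence "(e * norm (m - x)) / (2*(norm (m - x) + 1)) < e" using D by (simp add: divide_less_eq)
      thus ?thesis by simp
    qed
    finally show "\<exists>y\<in>A. dist y (x + u) < e" using yA d by metis
  qed
  thus ?thesis using clA by simp
qed



lemma rec_eq:
  fixes C A :: "'a::euclidean_space set"
  assumes pc: "proper_cone C" and as: "C_asymptotic C A"
  shows "recession_cone A = C"
proof -
  have clA: "closed A" and AC: "A \<subseteq> C" and iA: "interior A \<noteq> {}"
    using as unfolding C_asymptotic_def by auto
  have cC: "closed C" and cvC: "convex C" and iC: "interior C \<noteq> {}"
    using pc unfolding proper_cone_def by auto
  have rc: "recession_cone A = {u. \<forall>x\<in>A. x + u \<in> A}"
    unfolding recession_cone_def by auto
  have clR: "closed {u. \<forall>x\<in>A. x + u \<in> A}"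
  proof -
    have "{u. \<forall>x\<in>A. x + u \<in> A} = (\<Inter>x\<in>A. (+) (-x) ` A)"
    proof (intro equalityI subsetI)
      fix u assume "u \<in> {u. \<forall>x\<in>A. x + u \<in> A}"
      hence "\<forall>x\<in>A. u = -x + (x + u) \<and> x + u \<in> A" by simp
      thus "u \<in> (\<Inter>x\<in>A. (+) (-x) ` A)" by blast
    next
      fix u assume "u \<in> (\<Inter>x\<in>A. (+) (-x) ` A)"
      thus "u \<in> {u. \<forall>x\<in>A. x + u \<in> A}" by auto
    qed
    moreover have "closed (\<Inter>x\<in>A. (+) (-x) ` A)"
      apply (rule closed_INT, rule ballI, rule closed_translation) by (rule clA)
    ultimately show ?thesis by simp
  qed
  have "interior C \<subseteq> {u. \<forall>x\<in>A. x + u \<in> A}" using int_rec[OF pc as] by blast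
  hence "closure (interior C) \<subseteq> {u. \<forall>x\<in>A. x + u \<in> A}" using clR by (rule closure_minimal)
  hence sub1: "C \<subseteq> {u. \<forall>x\<in>A. x + u \<in> A}"
    using convex_closure_interior[OF cvC iC] cC by (simp add: closure_closed)
  have sub2: "{u. \<forall>x\<in>A. x + u \<in> A} \<subseteq> C"
  proof
    fix u assume u: "u \<in> {u. \<forall>x\<in>A. x + u \<in> A}"
    obtain p where p: "p \<in> A" using iA interior_subset by blast
    have pn: "p + real n *\<^sub>R u \<in> A" for n
    proof (induction n)
      case 0 then show ?case using p by simp
    next
      case (Suc n)
      then have "(p + real n *\<^sub>R u) + u \<in> A" using u by blast
      then show ?case by (simp add: algebra_simps)
    qed
    have "u \<in> closure C" unfolding closure_approachable
    proof (intro allI impI)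
      fix e :: real assume e: "e > 0"
      obtain n :: nat where n: "norm p / e < real n" using reals_Archimedean2 by blast
      have "norm p / e \<ge> 0" using e by simp
      hence npos: "real n > 0" using n by linarith
      have "(1 / real n) *\<^sub>R (p + real n *\<^sub>R u) \<in> C"
        using pn[of n] AC by (intro pc_scale[OF pc]) auto
      moreover have "(1 / real n) *\<^sub>R (p + real n *\<^sub>R u) = (1 / real n) *\<^sub>R p + u"
        using npos by (simp add: algebra_simps)
      moreover have "dist ((1 / real n) *\<^sub>R p + u) u = norm p / real n"
        by (simp add: dist_norm)
      moreover have "norm p / real n < e" using n npos e by (simp add: field_simps)
      ultimately show "\<exists>y\<in>C. dist y u < e" by metis
    qed
    thus "u \<in> C" using cC by simp
  qed
  show ?thesis using rc sub1 sub2 by blast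
qed



theorem lemma3p1:
  fixes C A :: "'a::euclidean_space set"
  assumes "DIM('a) \<ge> 2"
    and "proper_cone C"
    and "C_asymptotic C A"
  shows "C_pseudo_cone C A \<and>
         A = (\<Inter>v\<in>Omega_polar C. halfspace_le v (support_fun A v))"
proof -
  have pc: "proper_cone C" and as: "C_asymptotic C A" using assms by auto
  have clA: "closed A" and cvA: "convex A" and AC: "A \<subseteq> C" and iA: "interior A \<noteq> {}"
    and A0: "0 \<notin> A"
    using as unfolding C_asymptotic_def by auto
  have iC: "interior C \<noteq> {}" using pc unfolding proper_cone_def by auto
  have Ane: "A \<noteq> {}" using iA interior_subset by blast
  have rec: "recession_cone A = C" by (rule rec_eq[OF pc as])
  have memrec: "\<And>x c. x \<in> A \<Longrightarrow> c \<in> C \<Longrightarrow> x + c \<in> A"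
    using rec unfolding recession_cone_def by (auto simp: add.commute)
  have pseudo: "C_pseudo_cone C A"
    unfolding C_pseudo_cone_def
  proof (intro conjI ballI allI impI)
    fix x and t :: real assume x: "x \<in> A" and t: "t \<ge> 1"
    have "(t - 1) *\<^sub>R x \<in> C" using x AC t by (intro pc_scale[OF pc]) auto
    from memrec[OF x this] show "t *\<^sub>R x \<in> A" by (simp add: algebra_simps)
  qed (use Ane clA cvA A0 rec in auto)
  have bdd: "bdd_above ((\<lambda>x. x \<bullet> v) ` A)" if "v \<in> polar C" for v
  proof (rule bdd_aboveI2)
    fix x assume "x \<in> A"
    thus "x \<bullet> v \<le> 0" using that AC unfolding polar_def by blast
  qed
  have sub1: "A \<subseteq> (\<Inter>v\<in>Omega_polar C. halfspace_le v (support_fun A v))"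
  proof (intro subsetI INT_I)
    fix x v assume x: "x \<in> A" and v: "v \<in> Omega_polar C"
    have "v \<in> polar C" using v interior_subset unfolding Omega_polar_def by blast
    hence "x \<bullet> v \<le> support_fun A v" unfolding support_fun_def
      using x bdd by (intro cSUP_upper) auto
    thus "x \<in> halfspace_le v (support_fun A v)" by (simp add: halfspace_le_def)
  qed
  have sub2: "(\<Inter>v\<in>Omega_polar C. halfspace_le v (support_fun A v)) \<subseteq> A"
  proof
    fix z assume zI: "z \<in> (\<Inter>v\<in>Omega_polar C. halfspace_le v (support_fun A v))"
    show "z \<in> A"
    proof (rule ccontr)
      assume zA: "z \<notin> A"
      obtain a b where ab: "inner a z < b" "\<forall>x\<in>A. inner a x > b"
        using separating_hyperplane_closed_point[OF cvA clA zA] by blast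
      define v0 where "v0 = -a"
      define \<beta> where "\<beta> = -b"
      have xv0: "x \<bullet> v0 < \<beta>" if "x \<in> A" for x
        using ab(2) that by (simp add: v0_def \<beta>_def) (metis inner_commute)
      have zv0: "z \<bullet> v0 > \<beta>" using ab(1) by (simp add: v0_def \<beta>_def inner_commute)
      obtain p where p: "p \<in> A" using Ane by blast
      have v0pol: "c \<bullet> v0 \<le> 0" if c: "c \<in> C" for c
      proof (rule ccontr)
        assume "\<not> c \<bullet> v0 \<le> 0"
        hence cpos: "c \<bullet> v0 > 0" by simp
        define t where "t = (\<beta> - p \<bullet> v0) / (c \<bullet> v0) + 1"
        have t0: "t \<ge> 0" using xv0[OF p] cpos by (simp add: t_def)
        have "p + t *\<^sub>R c \<in> A" using memrec[OF p pc_scale[OF pc c t0]] .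
        hence "(p + t *\<^sub>R c) \<bullet> v0 < \<beta>" by (rule xv0)
        moreover have "(p + t *\<^sub>R c) \<bullet> v0 = \<beta> + c \<bullet> v0"
          using cpos by (simp add: t_def inner_add_left field_simps)
        ultimately show False using cpos by simp
      qed
      obtain w \<rho> where wr: "\<rho> > 0" "ball w \<rho> \<subseteq> polar C" using pc_int_polar[OF pc] by blast
      have wpol: "w \<in> polar C" using wr by auto
      define \<delta> where "\<delta> = z \<bullet> v0 - \<beta>"
      have dpos: "\<delta> > 0" using zv0 by (simp add: \<delta>_def)
      define lam where "lam = \<delta> / (\<delta> + \<bar>z \<bullet> w\<bar> + 1)"
      have den: "\<delta> + \<bar>z \<bullet> w\<bar> + 1 > 0" using dpos by (simp add: add_pos_nonneg)
      have lpos: "lam > 0" using dpos den by (simp add: lam_def)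
      have lle: "lam < 1" using dpos den by (simp add: lam_def divide_less_eq)
      have leq: "lam * (\<delta> + \<bar>z \<bullet> w\<bar> + 1) = \<delta>" using den by (simp add: lam_def)
      define v where "v = (1 - lam) *\<^sub>R v0 + lam *\<^sub>R w"
      have vball: "ball v (lam * \<rho>) \<subseteq> polar C"
      proof
        fix y assume "y \<in> ball v (lam * \<rho>)"
        hence n: "norm (y - v) < lam * \<rho>" by (simp add: dist_norm norm_minus_commute)
        define w' where "w' = w + (1/lam) *\<^sub>R (y - v)"
        have "norm (w - w') = norm (y - v) / lam" using lpos by (simp add: w'_def)
        also have "\<dots> < \<rho>" using n lpos by (simp add: divide_less_eq mult.commute)
        finally have "w' \<in> polar C" using wr(2) by (auto simp: dist_norm)
        moreover have "y = (1 - lam) *\<^sub>R v0 + lam *\<^sub>R w'"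
          using lpos by (simp add: w'_def v_def algebra_simps)
        ultimately show "y \<in> polar C" unfolding polar_def
        proof (clarsimp)
          fix c assume w'c: "\<forall>x\<in>C. x \<bullet> w' \<le> 0" and c: "c \<in> C"
          have "(1 - lam) * (c \<bullet> v0) \<le> 0" using v0pol[OF c] lle by (simp add: mult_nonneg_nonpos)
          moreover have "lam * (c \<bullet> w') \<le> 0" using w'c c lpos by (simp add: mult_nonneg_nonpos)
          ultimately show "c \<bullet> ((1 - lam) *\<^sub>R v0 + lam *\<^sub>R w') \<le> 0"
            by (simp add: inner_add_right)
        qed
      qed
      have vnz: "v \<noteq> 0"
      proof
        assume v0': "v = 0"
        obtain c0 where c0: "c0 \<in> interior C" using iC by blast
        have "c0 \<noteq> 0" using c0 pc_0_frontier[OF pc] by (auto simp: frontier_def)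
        define y where "y = ((lam * \<rho> / 2) / norm c0) *\<^sub>R c0"
        have "norm y = lam * \<rho> / 2" using \<open>c0 \<noteq> 0\<close> lpos wr(1) by (simp add: y_def)
        hence "norm y < lam * \<rho>" using mult_pos_pos[OF lpos wr(1)] by argo
        hence "y \<in> ball v (lam * \<rho>)" using v0' by (simp add: dist_norm)
        hence "y \<in> polar C" using vball by blast
        hence "c0 \<bullet> y \<le> 0" using c0 interior_subset unfolding polar_def by blast
        moreover have "c0 \<bullet> y = (lam * \<rho> / 2) / norm c0 * (c0 \<bullet> c0)" by (simp add: y_def)
        moreover have "(lam * \<rho> / 2) / norm c0 * (c0 \<bullet> c0) > 0"
          using \<open>c0 \<noteq> 0\<close> lpos wr(1) by simp
        ultimately show False by simp
      qed
      have nv: "norm v > 0" using vnz by simp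
      have xv: "x \<bullet> v \<le> (1 - lam) * \<beta>" if x: "x \<in> A" for x
      proof -
        have "x \<bullet> v = (1 - lam) * (x \<bullet> v0) + lam * (x \<bullet> w)" by (simp add: v_def inner_add_right)
        moreover have "(1 - lam) * (x \<bullet> v0) \<le> (1 - lam) * \<beta>"
          using xv0[OF x] lle by (intro mult_left_mono) auto
        moreover have "lam * (x \<bullet> w) \<le> 0"
          using wpol x AC lpos unfolding polar_def by (simp add: mult_nonneg_nonpos subset_iff)
        ultimately show ?thesis by argo
      qed
      have zv: "z \<bullet> v > (1 - lam) * \<beta>"
      proof -
        have e1: "z \<bullet> v = (1 - lam) * (z \<bullet> v0) + lam * (z \<bullet> w)" by (simp add: v_def inner_add_right)
        have e2: "(1 - lam) * (z \<bullet> v0) = (1 - lam) * \<beta> + (\<delta> - lam * \<delta>)" by (simp add: \<delta>_def algebra_simps)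
        have e3: "lam * (z \<bullet> w) \<ge> - (lam * \<bar>z \<bullet> w\<bar>)"
        proof -
          have "lam * (- \<bar>z \<bullet> w\<bar>) \<le> lam * (z \<bullet> w)" using lpos by (intro mult_left_mono) auto
          thus ?thesis by simp
        qed
        have e4: "lam * \<delta> + lam * \<bar>z \<bullet> w\<bar> + lam = \<delta>" using leq by (simp add: algebra_simps)
        have "z \<bullet> v = (1 - lam) * \<beta> + (\<delta> - lam * \<delta>) + lam * (z \<bullet> w)" using e1 e2 by simp
        also have "\<dots> \<ge> (1 - lam) * \<beta> + (\<delta> - lam * \<delta>) - lam * \<bar>z \<bullet> w\<bar>" using e3 by simp
        finally have "z \<bullet> v \<ge> (1 - lam) * \<beta> + (\<delta> - lam * \<delta>) - lam * \<bar>z \<bullet> w\<bar>" .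
        moreover have "(\<delta> - lam * \<delta>) - lam * \<bar>z \<bullet> w\<bar> = lam" using e4 by simp
        ultimately show ?thesis using lpos by simp
      qed
      define u where "u = (1 / norm v) *\<^sub>R v"
      have us: "u \<in> sphere 0 1" using nv by (simp add: u_def)
      have "ball u (lam * \<rho> / norm v) \<subseteq> polar C"
      proof
        fix y assume "y \<in> ball u (lam * \<rho> / norm v)"
        hence "norm (u - y) < lam * \<rho> / norm v" by (simp add: dist_norm)
        hence "norm v * norm (u - y) < lam * \<rho>" using nv by (simp add: less_divide_eq mult.commute)
        moreover have "norm v *\<^sub>R (u - y) = v - norm v *\<^sub>R y" using nv by (simp add: u_def algebra_simps)
        ultimately have "norm (v - norm v *\<^sub>R y) < lam * \<rho>" by (metis norm_scaleR abs_norm_cancel)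
        hence "norm v *\<^sub>R y \<in> polar C" using vball by (simp add: dist_norm subset_iff)
        thus "y \<in> polar C" unfolding polar_def using nv
          by (auto simp: mult_le_0_iff zero_less_mult_iff)
      qed
      hence "u \<in> interior (polar C)" using lpos wr(1) nv
        by (metis centre_in_ball divide_pos_pos interior_maximal open_ball subsetD mult_pos_pos)
      hence uO: "u \<in> Omega_polar C" using us by (simp add: Omega_polar_def)
      have "support_fun A u \<le> (1 - lam) * \<beta> / norm v" unfolding support_fun_def
      proof (rule cSUP_least[OF Ane])
        fix x assume "x \<in> A"
        hence "x \<bullet> v \<le> (1 - lam) * \<beta>" by (rule xv)
        thus "x \<bullet> u \<le> (1 - lam) * \<beta> / norm v" using nv by (simp add: u_def divide_right_mono)
      qed
      moreover have "z \<bullet> u > (1 - lam) * \<beta> / norm v" using zv nv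
        by (simp add: u_def divide_strict_right_mono)
      ultimately have "z \<notin> halfspace_le u (support_fun A u)" by (simp add: halfspace_le_def)
      thus False using zI uO by blast
    qed
  qed
  show ?thesis using pseudo sub1 sub2 by blast
qed


end
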